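(* Fix $\beta_0\in\mathbb{R}$ and $\beta=(\beta_1,\dots,\beta_d)\in\mathbb{R}^d$ with $\|\beta\|\ne0$. Let $f:\mathbb{R}^d\to\mathbb{R}$ be defined by $f(x)=f_0(\varphi(x))$, where $f_0:\mathbb{R}\to\mathbb{R}$ and $\varphi(x)=\beta_0+\langle\beta,x\rangle$. Let $g(x,x')=g_0(\|x-x'\|)$ be a smooth growth function, let $x\in\mathbb{R}^d$, and let $(w^*,z^* )$ with $w^*\ne z^*$ be such that $B^*(x)=\frac{|f(w^* )-f(z^* )|}{\|w^*-z^*\|\,g(x,z^* )}$. Then there exist $a,c\in\mathbb{R}$ such that, with $z_c:=x+\frac{c}{\|\beta\|}\beta$ and $w_a:=z_c+\frac{a}{\|\beta\|}\beta$, one has $\frac{|f(w_a)-f(z_c)|}{\|w_a-z_c\|\,g(x,z_c)}\ge B^*(x)$.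
   Context: $\mathbb{R}^d$ carries the Euclidean norm $\|\cdot\|$. A smooth growth function is $g(x,x')=g_0(\|x-x'\|)$ with $g_0:\mathbb{R}_{\ge0}\to\mathbb{R}_{\ge1}$ monotonically increasing, $g_0(0)=1$, $g_0(r_1+r_2)\le g_0(r_1)g_0(r_2)$. $B^*(x)$ denotes the $g$-smooth sensitivity of $f$ at $x$. *)

theory Defs
  imports "HOL-Analysis.Analysis" "HOL-Library.Extended_Real"
begin

definition smooth_growth_fun :: "(real \<Rightarrow> real) \<Rightarrow> bool" where
  "smooth_growth_fun g0 \<longleftrightarrow>
     mono_on {0..} g0 \<and> (\<forall>r\<ge>0. g0 r \<ge> 1) \<and> g0 0 = 1 \<and>
     (\<forall>r1 r2. r1 \<ge> 0 \<longrightarrow> r2 \<ge> 0 \<longrightarrow> g0 (r1 + r2) \<le> g0 r1 * g0 r2)"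

definition growth_of :: "(real \<Rightarrow> real) \<Rightarrow> 'a::real_normed_vector \<Rightarrow> 'a \<Rightarrow> real" where
  "growth_of g0 x x' = g0 (norm (x - x'))"

text \<open>g-smooth sensitivity (valued in the extended reals, so that it may be infinite).\<close>
definition smooth_sens ::
  "('a::real_normed_vector \<Rightarrow> 'a \<Rightarrow> real) \<Rightarrow> ('a \<Rightarrow> real) \<Rightarrow> 'a \<Rightarrow> ereal" where
  "smooth_sens g f x =
     (SUP p \<in> {(w, z). w \<noteq> z}. ereal (\<bar>f (fst p) - f (snd p)\<bar> / (norm (fst p - snd p) * g x (snd p))))"

end

theory Submission
  imports Defs
begin

theorem mainTheorem14:
  fixes \<beta>0 :: real and \<beta> :: "'a::euclidean_space" and f0 :: "real \<Rightarrow> real"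
    and g0 :: "real \<Rightarrow> real" and f :: "'a \<Rightarrow> real" and x w z :: 'a
  assumes "norm \<beta> \<noteq> 0"
    and "\<And>y. f y = f0 (\<beta>0 + \<beta> \<bullet> y)"
    and "smooth_growth_fun g0"
    and "w \<noteq> z"
    and "smooth_sens (growth_of g0) f x =
           ereal (\<bar>f w - f z\<bar> / (norm (w - z) * growth_of g0 x z))"
  shows "\<exists>a c :: real. a \<noteq> 0 \<and>
     (let zc = x + (c / norm \<beta>) *\<^sub>R \<beta>; wa = zc + (a / norm \<beta>) *\<^sub>R \<beta>
      in ereal (\<bar>f wa - f zc\<bar> / (norm (wa - zc) * growth_of g0 x zc))
         \<ge> smooth_sens (growth_of g0) f x)"
proof -
  define n where "n = norm \<beta>"
  have n0: "n > 0" using assms(1) n_def by simp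
  have bb: "\<beta> \<bullet> \<beta> = n * n" using n_def by (simp add: power2_eq_square[symmetric] power2_norm_eq_inner)
  have mono: "mono_on {0..} g0" and g1: "\<And>r. r \<ge> 0 \<Longrightarrow> g0 r \<ge> 1"
    using assms(3) unfolding smooth_growth_fun_def by auto
  define c where "c = (\<beta> \<bullet> (z - x)) / n"
  define zc where "zc = x + (c / n) *\<^sub>R \<beta>"
  have bzc: "\<beta> \<bullet> zc = \<beta> \<bullet> z"
    using n0 bb by (simp add: zc_def c_def inner_add_right inner_diff_right)
  have nzc: "norm (x - zc) = \<bar>c\<bar>"
    using n0 by (simp add: zc_def n_def[symmetric])
  have "\<bar>\<beta> \<bullet> (z - x)\<bar> \<le> n * norm (z - x)"
    using Cauchy_Schwarz_ineq2 n_def by blast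
  hence cle: "\<bar>c\<bar> \<le> norm (x - z)" using n0 by (simp add: c_def divide_le_eq norm_minus_commute mult.commute)
  have gpos: "growth_of g0 x zc > 0" unfolding growth_of_def using g1[of "norm (x - zc)"] by simp
  have gle: "growth_of g0 x zc \<le> growth_of g0 x z"
    unfolding growth_of_def nzc using mono cle by (auto intro: mono_onD)
  have fzc: "f zc = f z" using assms(2) bzc by simp
  show ?thesis
  proof (cases "\<beta> \<bullet> (w - z) = 0")
    case True
    have "f w = f z" using assms(2) True by (simp add: inner_diff_right)
    hence B: "smooth_sens (growth_of g0) f x = 0" using assms(5) by (simp add: zero_ereal_def)
    show ?thesis
      apply (rule exI[of _ 1], rule exI[of _ c])
      using gpos n0 by (simp add: Let_def B n_def[symmetric] zc_def[symmetric] divide_nonneg_nonneg less_imp_le del: growth_of_def)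
  next
    case False
    define a where "a = (\<beta> \<bullet> (w - z)) / n"
    have a0: "a \<noteq> 0" using False n0 by (simp add: a_def)
    define wa where "wa = zc + (a / n) *\<^sub>R \<beta>"
    have bwa: "\<beta> \<bullet> wa = \<beta> \<bullet> w"
      using n0 bb bzc by (simp add: wa_def a_def inner_add_right inner_diff_right)
    have fwa: "f wa = f w" using assms(2) bwa by simp
    have nwa: "norm (wa - zc) = \<bar>a\<bar>" using n0 by (simp add: wa_def n_def[symmetric])
    have "\<bar>\<beta> \<bullet> (w - z)\<bar> \<le> n * norm (w - z)"
      using Cauchy_Schwarz_ineq2 n_def by blast
    hence ale: "\<bar>a\<bar> \<le> norm (w - z)" using n0 by (simp add: a_def divide_le_eq mult.commute)
    have "\<bar>f w - f z\<bar> / (norm (w - z) * growth_of g0 x z) \<le> \<bar>f w - f z\<bar> / (\<bar>a\<bar> * growth_of g0 x zc)"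
      apply (rule divide_left_mono)
      using ale gle gpos a0 by (auto intro!: mult_mono mult_pos_pos)
    note L = this
    show ?thesis
      apply (rule exI[of _ a], rule exI[of _ c])
      using L a0 n0 by (simp add: Let_def zc_def[symmetric] wa_def[symmetric] fwa fzc nwa assms(5) n_def[symmetric] del: growth_of_def)
  qed
qed

end
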